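(* Let $p\in[1,\infty)$, $w$ a weight sequence, and let $A\subset L_{p,w}$ be bounded in $\|\cdot\|_{p,w}$. Then $A$ is equinormed with respect to $\{\|\cdot\|_{p,w,i}\}_{i\in\mathbb{N}}$ if and only if $$\forall\varepsilon>0\ \exists N\in\mathbb{N}\ \forall a\in A\ \forall i\ge N:\ \sum_{j=i+1}^\infty|a_j|^p\, w_{(\sigma^a)^{-1}_j}<\varepsilon.$$
   Context: A weight sequence is a sequence $w=(w_i)$ of positive reals with $w_1=1\ge w_2\ge\dots$, $w_i\to0$, and $\sum_i w_i=+\infty$. For a real sequence $a$, $\|a\|_{p,w}=\sup_{\sigma}\big(\sum_{i=1}^\infty |a_{\sigma_i}|^p w_i\big)^{1/p}$ over all permutations $\sigma$ of $\mathbb{N}$; $L_{p,w}$ is the set of real sequences with finite norm. $\|a\|_{p,w,i}=\|(a_1,\dots,a_i,0,0,\dots)\|_{p,w}$. $A$ is equinormed if $\forall\varepsilon>0\ \exists i\ \forall a\in A:\ \|a\|_{p,w}\le\|a\|_{p,w,i}+\varepsilon$. For $a\in L_{p,w}$, $\sigma^a:\mathbb{N}\to\mathbb{N}$ is defined recursively: $\sigma^a_i$ is the element $j$ of $\mathbb{N}\setminus\{\sigma^a_1,\dots,\sigma^a_{i-1}\}$ with $|a_j|$ maximal, taking the smallest such index in case of ties (well defined for $a\in L_{p,w}$, injective, with $|a_{\sigma^a_i}|$ nonincreasing). $(\sigma^a)^{-1}$ is its inverse on $\sigma^a(\mathbb{N})$, with the convention $w_{(\sigma^a)^{-1}_j}:=0$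 if $j\notin\sigma^a(\mathbb{N})$. *)

theory Defs
  imports "HOL-Analysis.Analysis"
begin

text \<open>Sequences are indexed from 0 (paper index k corresponds to Isabelle index k-1).\<close>

definition weight_seq :: "(nat \<Rightarrow> real) \<Rightarrow> bool" where
  "weight_seq w \<longleftrightarrow> w 0 = 1 \<and> (\<forall>i. w i > 0) \<and> decseq w \<and> w \<longlonglongrightarrow> 0
     \<and> \<not> summable w"

definition pw_normp :: "real \<Rightarrow> (nat \<Rightarrow> real) \<Rightarrow> (nat \<Rightarrow> real) \<Rightarrow> ennreal" where
  "pw_normp p w a = (SUP \<sigma>\<in>{\<sigma>::nat\<Rightarrow>nat. bij \<sigma>}. (\<Sum>i. ennreal (\<bar>a (\<sigma> i)\<bar> powr p * w i)))"

definition Lpw :: "real \<Rightarrow> (nat \<Rightarrow> real) \<Rightarrow> (nat \<Rightarrow> real) set" where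
  "Lpw p w = {a. pw_normp p w a < \<infinity>}"

text \<open>The norm (meaningful for elements of Lpw).\<close>
definition pw_norm :: "real \<Rightarrow> (nat \<Rightarrow> real) \<Rightarrow> (nat \<Rightarrow> real) \<Rightarrow> real" where
  "pw_norm p w a = (enn2real (pw_normp p w a)) powr (1 / p)"

text \<open>Truncated norm: norm of (a_1,...,a_i,0,0,...), i.e. Isabelle indices < i kept.\<close>
definition pw_norm_i :: "real \<Rightarrow> (nat \<Rightarrow> real) \<Rightarrow> nat \<Rightarrow> (nat \<Rightarrow> real) \<Rightarrow> real" where
  "pw_norm_i p w i a = pw_norm p w (\<lambda>j. if j < i then a j else 0)"

definition equinormed :: "real \<Rightarrow> (nat \<Rightarrow> real) \<Rightarrow> (nat \<Rightarrow> real) set \<Rightarrow> bool" where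
  "equinormed p w A \<longleftrightarrow>
     (\<forall>\<epsilon>>0. \<exists>i. \<forall>a\<in>A. pw_norm p w a \<le> pw_norm_i p w i a + \<epsilon>)"

text \<open>Greedy rearrangement sigma^a: list of the first i chosen indices.\<close>
fun sig_list :: "(nat \<Rightarrow> real) \<Rightarrow> nat \<Rightarrow> nat list" where
  "sig_list a 0 = []"
| "sig_list a (Suc i) = sig_list a i @
     [LEAST j. j \<notin> set (sig_list a i) \<and>
        (\<forall>k. k \<notin> set (sig_list a i) \<longrightarrow> \<bar>a k\<bar> \<le> \<bar>a j\<bar>)]"

definition sigma_a :: "(nat \<Rightarrow> real) \<Rightarrow> nat \<Rightarrow> nat" where
  "sigma_a a i = last (sig_list a (Suc i))"

text \<open>w_{(sigma^a)^{-1}_j}, with value 0 if j is not in the range of sigma^a.\<close>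
definition w_inv :: "(nat \<Rightarrow> real) \<Rightarrow> (nat \<Rightarrow> real) \<Rightarrow> nat \<Rightarrow> real" where
  "w_inv w a j = (if j \<in> range (sigma_a a) then w (inv (sigma_a a) j) else 0)"

end

theory Submission
  imports Defs "HOL-Combinatorics.Transposition"
begin

lemma greedy_exists:
  fixes a :: "nat \<Rightarrow> real"
  assumes a0: "a \<longlonglongrightarrow> 0" and fin: "finite L"
  shows "\<exists>j. j \<notin> L \<and> (\<forall>k. k \<notin> L \<longrightarrow> \<bar>a k\<bar> \<le> \<bar>a j\<bar>)"
proof (cases "\<forall>k. k \<notin> L \<longrightarrow> a k = 0")
  case True
  obtain j where "j \<notin> L" using fin ex_new_if_finite[OF infinite_UNIV_nat] by blast
  then show ?thesis using True by auto
next
  case False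
  then obtain j0 where j0: "j0 \<notin> L" "a j0 \<noteq> 0" by auto
  define M where "M = {k. k \<notin> L \<and> \<bar>a j0\<bar> \<le> \<bar>a k\<bar>}"
  have "\<forall>\<^sub>F k in sequentially. \<bar>a k\<bar> < \<bar>a j0\<bar>"
    using a0 j0(2) by (auto simp: tendsto_iff dest!: spec[of _ "\<bar>a j0\<bar>"])
  then obtain N where N: "\<And>k. k \<ge> N \<Longrightarrow> \<bar>a k\<bar> < \<bar>a j0\<bar>" by (auto simp: eventually_sequentially)
  have "M \<subseteq> {..<N}"
  proof
    fix k assume "k \<in> M"
    show "k \<in> {..<N}" proof (rule ccontr)
      assume "k \<notin> {..<N}" then have "N \<le> k" by simp
      then have "\<bar>a k\<bar> < \<bar>a j0\<bar>" by (rule N)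
      with \<open>k \<in> M\<close> show False by (simp add: M_def)
    qed
  qed
  hence finM: "finite M" by (rule finite_subset) simp
  have "j0 \<in> M" using j0 by (simp add: M_def)
  have "Max ((\<lambda>k. \<bar>a k\<bar>) ` M) \<in> (\<lambda>k. \<bar>a k\<bar>) ` M"
    using finM \<open>j0 \<in> M\<close> by (intro Max_in) auto
  then obtain j where jM: "j \<in> M" and jmax: "\<bar>a j\<bar> = Max ((\<lambda>k. \<bar>a k\<bar>) ` M)" by auto
  have j: "j \<in> M" "\<And>k. k \<in> M \<Longrightarrow> \<bar>a k\<bar> \<le> \<bar>a j\<bar>"
    using jM jmax finM by auto
  show ?thesis
  proof (intro exI conjI allI impI)
    show "j \<notin> L" using j(1) by (simp add: M_def)
    fix k assume "k \<notin> L"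
    show "\<bar>a k\<bar> \<le> \<bar>a j\<bar>"
    proof (cases "\<bar>a j0\<bar> \<le> \<bar>a k\<bar>")
      case True then show ?thesis using j(2) \<open>k \<notin> L\<close> by (simp add: M_def)
    next
      case False then show ?thesis using j(1) by (simp add: M_def)
    qed
  qed
qed

lemma length_sig_list[simp]: "length (sig_list a n) = n"
  by (induction n) auto

lemma sig_list_Suc: "sig_list a (Suc i) = sig_list a i @ [sigma_a a i]"
  by (simp add: sigma_a_def)

lemma sig_list_map: "sig_list a n = map (sigma_a a) [0..<n]"
  by (induction n) (simp_all add: sig_list_Suc del: sig_list.simps(2))

lemma set_sig_list: "set (sig_list a n) = sigma_a a ` {..<n}"
  by (simp add: sig_list_map atLeast0LessThan)

lemma sigma_prop:
  fixes a :: "nat \<Rightarrow> real"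
  assumes a0: "a \<longlonglongrightarrow> 0"
  shows "sigma_a a i \<notin> sigma_a a ` {..<i} \<and> (\<forall>k. k \<notin> sigma_a a ` {..<i} \<longrightarrow> \<bar>a k\<bar> \<le> \<bar>a (sigma_a a i)\<bar>)"
proof -
  let ?L = "sig_list a i"
  have ex: "\<exists>j. j \<notin> set ?L \<and> (\<forall>k. k \<notin> set ?L \<longrightarrow> \<bar>a k\<bar> \<le> \<bar>a j\<bar>)"
    using greedy_exists[OF a0, of "set ?L"] by simp
  have e: "sigma_a a i = (LEAST j. j \<notin> set ?L \<and> (\<forall>k. k \<notin> set ?L \<longrightarrow> \<bar>a k\<bar> \<le> \<bar>a j\<bar>))"
    by (simp add: sigma_a_def)
  have "sigma_a a i \<notin> set ?L \<and> (\<forall>k. k \<notin> set ?L \<longrightarrow> \<bar>a k\<bar> \<le> \<bar>a (sigma_a a i)\<bar>)"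
    unfolding e by (rule LeastI_ex[OF ex])
  then show ?thesis unfolding set_sig_list .
qed

lemma sigma_inj:
  fixes a :: "nat \<Rightarrow> real"
  assumes a0: "a \<longlonglongrightarrow> 0"
  shows "inj (sigma_a a)"
proof (rule injI)
  fix x y assume e: "sigma_a a x = sigma_a a y"
  show "x = y"
  proof (rule ccontr)
    assume "x \<noteq> y"
    then consider "x < y" | "y < x" by linarith
    then show False
    proof cases
      case 1
      then have "sigma_a a x \<in> sigma_a a ` {..<y}" by auto
      then show False using sigma_prop[OF a0, of y] e by auto
    next
      case 2
      then have "sigma_a a y \<in> sigma_a a ` {..<x}" by auto
      then show False using sigma_prop[OF a0, of x] e by auto
    qed
  qed
qed

lemma sigma_ge:
  fixes a :: "nat \<Rightarrow> real"
  assumes a0: "a \<longlonglongrightarrow> 0" and "k \<notin> sigma_a a ` {..<i}"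
  shows "\<bar>a k\<bar> \<le> \<bar>a (sigma_a a i)\<bar>"
  using sigma_prop[OF a0, of i] assms(2) by blast

lemma sigma_mono:
  fixes a :: "nat \<Rightarrow> real"
  assumes a0: "a \<longlonglongrightarrow> 0" and "i \<le> i'"
  shows "\<bar>a (sigma_a a i')\<bar> \<le> \<bar>a (sigma_a a i)\<bar>"
proof (rule sigma_ge[OF a0])
  show "sigma_a a i' \<notin> sigma_a a ` {..<i}"
    using sigma_prop[OF a0, of i'] assms(2) by auto
qed

lemma sigma_cover:
  fixes a :: "nat \<Rightarrow> real"
  assumes a0: "a \<longlonglongrightarrow> 0" and "a j \<noteq> 0"
  shows "j \<in> range (sigma_a a)"
proof (rule ccontr)
  assume nr: "j \<notin> range (sigma_a a)"
  have "\<forall>\<^sub>F k in sequentially. \<bar>a k\<bar> < \<bar>a j\<bar>"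
    using a0 assms(2) by (auto simp: tendsto_iff dest!: spec[of _ "\<bar>a j\<bar>"])
  then obtain N where N: "\<And>k. k \<ge> N \<Longrightarrow> \<bar>a k\<bar> < \<bar>a j\<bar>" by (auto simp: eventually_sequentially)
  have "\<And>i. sigma_a a i < N"
  proof -
    fix i
    have "\<bar>a j\<bar> \<le> \<bar>a (sigma_a a i)\<bar>" using sigma_ge[OF a0, of j i] nr by auto
    show "sigma_a a i < N"
    proof (rule ccontr)
      assume "\<not> sigma_a a i < N" then have "N \<le> sigma_a a i" by simp
      then have "\<bar>a (sigma_a a i)\<bar> < \<bar>a j\<bar>" by (rule N)
      with \<open>\<bar>a j\<bar> \<le> \<bar>a (sigma_a a i)\<bar>\<close> show False by simp
    qed
  qed
  hence "range (sigma_a a) \<subseteq> {..<N}" by auto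
  hence "finite (range (sigma_a a))" using finite_subset by blast
  thus False using sigma_inj[OF a0] finite_imageD by (metis infinite_UNIV_nat)
qed


lemma top_sum:
  fixes b :: "nat \<Rightarrow> real" and p :: real
  assumes b0: "b \<longlonglongrightarrow> 0" and p: "p \<ge> 0" and finU: "finite U" and cU: "card U \<le> n"
  shows "(\<Sum>j\<in>U. \<bar>b j\<bar> powr p) \<le> (\<Sum>k<n. \<bar>b (sigma_a b k)\<bar> powr p)"
proof (cases "n = 0")
  case True then show ?thesis using finU cU by simp
next
  case False
  define g where "g j = \<bar>b j\<bar> powr p" for j
  define G where "G = sigma_a b ` {..<n}"
  define c where "c = g (sigma_a b (n - 1))"
  have inj: "inj (sigma_a b)" using sigma_inj[OF b0] .
  have finG: "finite G" by (simp add: G_def)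
  have cG: "card G = n" unfolding G_def using inj by (simp add: card_image inj_on_subset)
  have out: "g j \<le> c" if "j \<notin> G" for j
  proof -
    have "j \<notin> sigma_a b ` {..<n - 1}" using that False by (auto simp: G_def)
    then have "\<bar>b j\<bar> \<le> \<bar>b (sigma_a b (n - 1))\<bar>" by (rule sigma_ge[OF b0])
    then show ?thesis unfolding g_def c_def by (intro powr_mono2) (use p in auto)
  qed
  have inn: "c \<le> g j" if "j \<in> G" for j
  proof -
    obtain k where k: "k < n" "j = sigma_a b k" using \<open>j \<in> G\<close> by (auto simp: G_def)
    have "\<bar>b (sigma_a b (n - 1))\<bar> \<le> \<bar>b j\<bar>" using k sigma_mono[OF b0, of k "n - 1"] by simp
    then show ?thesis unfolding g_def c_def by (intro powr_mono2) (use p in auto)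
  qed
  have card1: "card (U - G) \<le> card (G - U)"
  proof -
    have "card U = card (U \<inter> G) + card (U - G)"
      using finU by (metis card_Int_Diff)
    moreover have "card G = card (G \<inter> U) + card (G - U)"
      using finG by (metis card_Int_Diff)
    ultimately show ?thesis using cU cG by (simp add: Int_commute)
  qed
  have "(\<Sum>j\<in>U. g j) = (\<Sum>j\<in>U \<inter> G. g j) + (\<Sum>j\<in>U - G. g j)"
    using finU by (metis sum.Int_Diff)
  also have "(\<Sum>j\<in>U - G. g j) \<le> (\<Sum>j\<in>U - G. c)"
    by (intro sum_mono out) auto
  also have "(\<Sum>j\<in>U - G. c) = real (card (U - G)) * c" by simp
  also have "\<dots> \<le> real (card (G - U)) * c"
  proof (intro mult_right_mono)
    show "real (card (U - G)) \<le> real (card (G - U))" using card1 by simp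
    show "0 \<le> c" unfolding c_def g_def by simp
  qed
  also have "real (card (G - U)) * c = (\<Sum>j\<in>G - U. c)" by simp
  also have "(\<Sum>j\<in>G - U. c) \<le> (\<Sum>j\<in>G - U. g j)"
    by (intro sum_mono inn) auto
  also have "(\<Sum>j\<in>U \<inter> G. g j) + (\<Sum>j\<in>G - U. g j) = (\<Sum>j\<in>G. g j)"
    using finG by (metis Int_commute sum.Int_Diff)
  also have "(\<Sum>j\<in>G. g j) = (\<Sum>k<n. g (sigma_a b k))"
    unfolding G_def using inj by (simp add: sum.reindex inj_on_subset)
  finally show ?thesis by (simp add: g_def)
qed

lemma abel_identity:
  fixes x w :: "nat \<Rightarrow> real"
  shows "(\<Sum>k<n. x k * w k) = (\<Sum>m<n. (\<Sum>k<Suc m. x k) * (w m - w (Suc m))) + (\<Sum>k<n. x k) * w n"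
  by (induction n) (simp_all add: algebra_simps)

lemma abel_compare_fin:
  fixes c e w :: "nat \<Rightarrow> real"
  assumes wdec: "\<And>k. w (Suc k) \<le> w k" and wpos: "\<And>k. 0 \<le> w k"
    and part: "\<And>m. (\<Sum>k<m. c k) \<le> (\<Sum>k<m. e k)"
  shows "(\<Sum>k<n. c k * w k) \<le> (\<Sum>k<n. e k * w k)"
proof -
  define x where "x k = e k - c k" for k
  have X: "0 \<le> (\<Sum>k<m. x k)" for m using part[of m] by (simp add: x_def sum_subtractf)
  have "0 \<le> (\<Sum>m<n. (\<Sum>k<Suc m. x k) * (w m - w (Suc m))) + (\<Sum>k<n. x k) * w n"
  proof (intro add_nonneg_nonneg sum_nonneg)
    fix m show "0 \<le> (\<Sum>k<Suc m. x k) * (w m - w (Suc m))"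
      using X[of "Suc m"] wdec[of m] by simp
  next
    show "0 \<le> (\<Sum>k<n. x k) * w n" using X[of n] wpos[of n] by simp
  qed
  also have "\<dots> = (\<Sum>k<n. x k * w k)" by (rule abel_identity[symmetric])
  also have "\<dots> = (\<Sum>k<n. e k * w k) - (\<Sum>k<n. c k * w k)"
    by (simp add: x_def algebra_simps sum_subtractf)
  finally show ?thesis by simp
qed

lemma abel_compare:
  fixes c e w :: "nat \<Rightarrow> real"
  assumes wdec: "\<And>k. w (Suc k) \<le> w k" and wpos: "\<And>k. 0 \<le> w k"
    and cpos: "\<And>k. 0 \<le> c k" and epos: "\<And>k. 0 \<le> e k"
    and part: "\<And>m. (\<Sum>k<m. c k) \<le> (\<Sum>k<m. e k)"
  shows "(\<Sum>k. ennreal (c k * w k)) \<le> (\<Sum>k. ennreal (e k * w k))"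
proof -
  have "(\<Sum>k<n. ennreal (c k * w k)) \<le> (\<Sum>k<n. ennreal (e k * w k))" for n
  proof -
    have "(\<Sum>k<n. ennreal (c k * w k)) = ennreal (\<Sum>k<n. c k * w k)"
      using cpos wpos by (intro sum_ennreal) auto
    also have "\<dots> \<le> ennreal (\<Sum>k<n. e k * w k)"
      by (intro ennreal_leI abel_compare_fin[of w c e, OF wdec wpos part])
    also have "\<dots> = (\<Sum>k<n. ennreal (e k * w k))"
      using epos wpos by (intro sum_ennreal[symmetric]) auto
    finally show ?thesis .
  qed
  then show ?thesis unfolding suminf_eq_SUP by (intro SUP_mono) auto
qed


lemma ext_bij:
  fixes \<tau> :: "nat \<Rightarrow> nat"
  assumes inj: "inj \<tau>"
  shows "\<exists>\<pi>. bij \<pi> \<and> (\<forall>i<M. \<pi> i = \<tau> i)"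
proof (induction M)
  case 0
  have "bij (id::nat\<Rightarrow>nat)" by (rule bij_id)
  then show ?case by blast
next
  case (Suc M)
  then obtain \<pi> where bp: "bij \<pi>" and e: "\<forall>i<M. \<pi> i = \<tau> i" by blast
  define y where "y = inv \<pi> (\<tau> M)"
  have py: "\<pi> y = \<tau> M" unfolding y_def using bp by (meson bij_inv_eq_iff)
  have yM: "M \<le> y"
  proof (rule ccontr)
    assume "\<not> M \<le> y" then have "y < M" by simp
    then have "\<pi> y = \<tau> y" using e by simp
    with py have "\<tau> y = \<tau> M" by simp
    with inj have "y = M" by (simp add: inj_eq)
    with \<open>y < M\<close> show False by simp
  qed
  define \<pi>' where "\<pi>' = \<pi> \<circ> Transposition.transpose M y"
  have "bij \<pi>'" unfolding \<pi>'_def using bp by (intro bij_comp) simp_all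
  moreover have "\<forall>i<Suc M. \<pi>' i = \<tau> i"
  proof (intro allI impI)
    fix i assume "i < Suc M"
    then consider "i < M" | "i = M" by linarith
    then show "\<pi>' i = \<tau> i"
    proof cases
      case 1 then have "i \<noteq> M" "i \<noteq> y" using yM by auto
      then show ?thesis using e 1 by (simp add: \<pi>'_def)
    next
      case 2 then show ?thesis using py by (simp add: \<pi>'_def)
    qed
  qed
  ultimately show ?case by blast
qed

lemma weight_props:
  assumes "weight_seq w"
  shows "\<And>k. 0 < w k" "\<And>k. w (Suc k) \<le> w k" "\<And>k. w k \<le> 1" "w \<longlonglongrightarrow> 0"
    "\<And>k k'. k \<le> k' \<Longrightarrow> w k' \<le> w k" "\<not> summable w"
proof -
  have d: "decseq w" and w0: "w 0 = 1" using assms by (auto simp: weight_seq_def)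
  show "\<And>k. 0 < w k" "w \<longlonglongrightarrow> 0" "\<not> summable w" using assms by (auto simp: weight_seq_def)
  show "\<And>k k'. k \<le> k' \<Longrightarrow> w k' \<le> w k" using d by (simp add: decseq_def)
  show "\<And>k. w (Suc k) \<le> w k" using d by (simp add: decseq_Suc_iff)
  show "\<And>k. w k \<le> 1" using d w0 by (metis decseq_def le0)
qed

lemma pw_ge_inj:
  fixes a :: "nat \<Rightarrow> real"
  assumes wpos: "\<And>k. 0 \<le> w k" and inj: "inj \<tau>"
  shows "(\<Sum>i. ennreal (\<bar>a (\<tau> i)\<bar> powr p * w i)) \<le> pw_normp p w a"
  unfolding suminf_eq_SUP
proof (rule SUP_least)
  fix M :: nat
  obtain \<pi> where bp: "bij \<pi>" and e: "\<forall>i<M. \<pi> i = \<tau> i" using ext_bij[OF inj] by blast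
  have "(\<Sum>i<M. ennreal (\<bar>a (\<tau> i)\<bar> powr p * w i)) = (\<Sum>i<M. ennreal (\<bar>a (\<pi> i)\<bar> powr p * w i))"
    using e by (intro sum.cong) auto
  also have "\<dots> \<le> (\<Sum>i. ennreal (\<bar>a (\<pi> i)\<bar> powr p * w i))"
    unfolding suminf_eq_SUP by (rule SUP_upper) simp
  also have "\<dots> \<le> pw_normp p w a"
    unfolding pw_normp_def by (rule SUP_upper) (use bp in simp)
  finally show "(\<Sum>i<M. ennreal (\<bar>a (\<tau> i)\<bar> powr p * w i)) \<le> pw_normp p w a" .
qed

lemma inj_le_sorted:
  fixes a :: "nat \<Rightarrow> real"
  assumes a0: "a \<longlonglongrightarrow> 0" and p: "0 \<le> p" and wdec: "\<And>k. w (Suc k) \<le> w k"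
    and wpos: "\<And>k. 0 \<le> w k" and inj: "inj \<tau>"
  shows "(\<Sum>i. ennreal (\<bar>a (\<tau> i)\<bar> powr p * w i)) \<le> (\<Sum>k. ennreal (\<bar>a (sigma_a a k)\<bar> powr p * w k))"
proof (rule abel_compare[of w, OF wdec wpos])
  fix m
  have "(\<Sum>k<m. \<bar>a (\<tau> k)\<bar> powr p) = (\<Sum>j\<in>\<tau> ` {..<m}. \<bar>a j\<bar> powr p)"
    using inj by (simp add: sum.reindex inj_on_subset)
  also have "\<dots> \<le> (\<Sum>k<m. \<bar>a (sigma_a a k)\<bar> powr p)"
    by (rule top_sum[OF a0 p]) (simp_all add: card_image inj_on_subset[OF inj])
  finally show "(\<Sum>k<m. \<bar>a (\<tau> k)\<bar> powr p) \<le> (\<Sum>k<m. \<bar>a (sigma_a a k)\<bar> powr p)" .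
qed auto

lemma pw_eq_sorted:
  fixes a :: "nat \<Rightarrow> real"
  assumes a0: "a \<longlonglongrightarrow> 0" and p: "0 \<le> p" and wdec: "\<And>k. w (Suc k) \<le> w k"
    and wpos: "\<And>k. 0 \<le> w k"
  shows "pw_normp p w a = (\<Sum>k. ennreal (\<bar>a (sigma_a a k)\<bar> powr p * w k))"
proof (rule antisym)
  show "pw_normp p w a \<le> (\<Sum>k. ennreal (\<bar>a (sigma_a a k)\<bar> powr p * w k))"
    unfolding pw_normp_def
    by (rule SUP_least) (auto intro!: inj_le_sorted[of a p w, OF a0 p wdec wpos] bij_is_inj)
  show "(\<Sum>k. ennreal (\<bar>a (sigma_a a k)\<bar> powr p * w k)) \<le> pw_normp p w a"
    by (rule pw_ge_inj[OF wpos sigma_inj[OF a0]])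
qed


lemma suminf_infsum_ennreal:
  fixes H :: "nat \<Rightarrow> ennreal"
  shows "suminf H = infsum H UNIV"
proof -
  have "H summable_on UNIV" by (rule nonneg_summable_on_complete) simp
  then have "(H has_sum infsum H UNIV) UNIV" by (rule has_sum_infsum)
  then have "H sums infsum H UNIV" by (rule has_sum_imp_sums)
  then show ?thesis by (rule sums_unique[symmetric])
qed

lemma suminf_reindex_ennreal:
  fixes H :: "nat \<Rightarrow> ennreal"
  assumes inj: "inj s" and z: "\<And>j. j \<notin> range s \<Longrightarrow> H j = 0"
  shows "suminf H = (\<Sum>k. H (s k))"
proof -
  have "suminf H = infsum H UNIV" by (rule suminf_infsum_ennreal)
  also have "\<dots> = infsum H (range s)"
    by (rule infsum_cong_neutral) (use z in auto)
  also have "\<dots> = infsum (H \<circ> s) UNIV" by (rule infsum_reindex) (use inj in simp)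
  also have "\<dots> = (\<Sum>k. H (s k))" using suminf_infsum_ennreal[of "H \<circ> s"] by (simp add: comp_def)
  finally show ?thesis .
qed

lemma suminf_shift_ennreal:
  fixes H :: "nat \<Rightarrow> ennreal"
  assumes z: "\<And>j. j < i \<Longrightarrow> H j = 0"
  shows "(\<Sum>j. H (j + i)) = suminf H"
proof -
  have "suminf H = (\<Sum>j. H (j + i)) + (\<Sum>j<i. H j)"
    by (rule suminf_offset) (rule summableI)
  also have "(\<Sum>j<i. H j) = 0" using z by simp
  finally show ?thesis by simp
qed

lemma Lpw_tendsto:
  fixes a :: "nat \<Rightarrow> real"
  assumes w: "weight_seq w" and p: "0 < p" and aL: "a \<in> Lpw p w"
  shows "a \<longlonglongrightarrow> 0"
proof (rule ccontr)
  assume na: "\<not> a \<longlonglongrightarrow> 0"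
  then obtain r where r: "r > 0" and fr: "\<And>N. \<exists>n\<ge>N. \<not> \<bar>a n\<bar> < r"
    unfolding LIMSEQ_iff by auto
  define D where "D = {n. r \<le> \<bar>a n\<bar>}"
  have infD: "infinite D" unfolding D_def infinite_nat_iff_unbounded_le using fr by (simp add: not_less)
  define \<tau> where "\<tau> = enumerate D"
  have inj: "inj \<tau>" unfolding \<tau>_def using strict_mono_enumerate[OF infD] strict_mono_imp_inj_on by blast
  have inD: "\<tau> i \<in> D" for i unfolding \<tau>_def by (rule enumerate_in_set[OF infD])
  have wpos: "\<And>k. 0 \<le> w k" using weight_props(1)[OF w] less_imp_le by blast
  have "(\<Sum>i. ennreal (r powr p * w i)) \<le> (\<Sum>i. ennreal (\<bar>a (\<tau> i)\<bar> powr p * w i))"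
  proof (intro suminf_le ennreal_leI mult_right_mono powr_mono2 wpos)
    fix i show "r \<le> \<bar>a (\<tau> i)\<bar>" using inD[of i] by (simp add: D_def)
  qed (use p r in auto)
  also have "\<dots> \<le> pw_normp p w a" by (rule pw_ge_inj[OF wpos inj])
  also have "\<dots> < \<infinity>" using aL by (simp add: Lpw_def)
  finally have "(\<Sum>i. ennreal (r powr p * w i)) \<noteq> top" by simp
  then have "summable (\<lambda>i. r powr p * w i)"
    by (rule summable_suminf_not_top[rotated]) (use wpos r in simp)
  then have "summable w" using r by (simp add: summable_cmult_iff)
  then show False using weight_props(6)[OF w] by simp
qed

definition trunc :: "nat \<Rightarrow> (nat \<Rightarrow> real) \<Rightarrow> nat \<Rightarrow> real" where
  "trunc i a = (\<lambda>j. if j < i then a j else 0)"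

lemma trunc_tendsto: "trunc i a \<longlonglongrightarrow> 0"
proof (rule tendsto_eventually)
  show "\<forall>\<^sub>F j in sequentially. trunc i a j = 0"
    unfolding eventually_sequentially trunc_def by (intro exI[of _ i]) auto
qed

lemma kth_compare:
  fixes a b :: "nat \<Rightarrow> real"
  assumes a0: "a \<longlonglongrightarrow> 0" and b0: "b \<longlonglongrightarrow> 0" and le: "\<And>j. \<bar>b j\<bar> \<le> \<bar>a j\<bar>"
  shows "\<bar>b (sigma_a b k)\<bar> \<le> \<bar>a (sigma_a a k)\<bar>"
proof -
  let ?U = "sigma_a b ` {..k}"
  have cU: "card ?U = Suc k" using sigma_inj[OF b0] by (simp add: card_image inj_on_subset)
  have "\<not> ?U \<subseteq> sigma_a a ` {..<k}"
  proof
    assume "?U \<subseteq> sigma_a a ` {..<k}"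
    then have "card ?U \<le> card (sigma_a a ` {..<k})" by (intro card_mono) auto
    also have "\<dots> \<le> k" using card_image_le[of "{..<k}" "sigma_a a"] by simp
    finally show False using cU by simp
  qed
  then obtain k' where k': "k' \<le> k" "sigma_a b k' \<notin> sigma_a a ` {..<k}" by auto
  have "\<bar>b (sigma_a b k)\<bar> \<le> \<bar>b (sigma_a b k')\<bar>" by (rule sigma_mono[OF b0 k'(1)])
  also have "\<dots> \<le> \<bar>a (sigma_a b k')\<bar>" by (rule le)
  also have "\<dots> \<le> \<bar>a (sigma_a a k)\<bar>" by (rule sigma_ge[OF a0 k'(2)])
  finally show ?thesis .
qed

lemma trunc_sigma_zero:
  fixes a :: "nat \<Rightarrow> real"
  assumes "i \<le> k"
  shows "trunc i a (sigma_a (trunc i a) k) = 0"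
proof (rule ccontr)
  let ?b = "trunc i a"
  have b0: "?b \<longlonglongrightarrow> 0" by (rule trunc_tendsto)
  assume nz: "?b (sigma_a ?b k) \<noteq> 0"
  have "sigma_a ?b ` {..k} \<subseteq> {..<i}"
  proof
    fix x assume "x \<in> sigma_a ?b ` {..k}"
    then obtain k' where k': "k' \<le> k" "x = sigma_a ?b k'" by auto
    have "\<bar>?b (sigma_a ?b k)\<bar> \<le> \<bar>?b x\<bar>" using sigma_mono[OF b0 k'(1)] k'(2) by simp
    then have "?b x \<noteq> 0" using nz by auto
    then show "x \<in> {..<i}" by (auto simp: trunc_def split: if_splits)
  qed
  then have "card (sigma_a ?b ` {..k}) \<le> i" by (metis card_lessThan card_mono finite_lessThan)
  moreover have "card (sigma_a ?b ` {..k}) = Suc k"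
    using sigma_inj[OF b0] by (simp add: card_image inj_on_subset)
  ultimately show False using assms by simp
qed

lemma tail_identity:
  fixes a :: "nat \<Rightarrow> real"
  assumes a0: "a \<longlonglongrightarrow> 0"
  shows "(\<Sum>j. ennreal (\<bar>a (j + i)\<bar> powr p * w_inv w a (j + i)))
       = (\<Sum>k. ennreal (\<bar>a (sigma_a a k)\<bar> powr p * w k * (if i \<le> sigma_a a k then 1 else 0)))"
proof -
  define H where "H j = ennreal (\<bar>a j\<bar> powr p * w_inv w a j * (if i \<le> j then 1 else 0))" for j
  have "(\<Sum>j. ennreal (\<bar>a (j + i)\<bar> powr p * w_inv w a (j + i))) = (\<Sum>j. H (j + i))"
    by (simp add: H_def)
  also have "\<dots> = suminf H" by (rule suminf_shift_ennreal) (simp add: H_def)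
  also have "\<dots> = (\<Sum>k. H (sigma_a a k))"
    by (rule suminf_reindex_ennreal[OF sigma_inj[OF a0]]) (simp add: H_def w_inv_def)
  also have "\<dots> = (\<Sum>k. ennreal (\<bar>a (sigma_a a k)\<bar> powr p * w k * (if i \<le> sigma_a a k then 1 else 0)))"
    using sigma_inj[OF a0] by (simp add: H_def w_inv_def)
  finally show ?thesis .
qed


lemma trunc_abs_le: "\<bar>trunc i a j\<bar> \<le> \<bar>a j\<bar>"
  by (simp add: trunc_def)

lemma back_core:
  fixes a :: "nat \<Rightarrow> real"
  assumes a0: "a \<longlonglongrightarrow> 0" and p: "0 \<le> p" and wdec: "\<And>k. w (Suc k) \<le> w k"
    and wpos: "\<And>k. 0 \<le> w k"
  shows "pw_normp p w a \<le> pw_normp p w (trunc N a)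
     + (\<Sum>k. ennreal (\<bar>a (sigma_a a k)\<bar> powr p * w k * (if N \<le> sigma_a a k then 1 else 0)))"
proof -
  let ?s = "sigma_a a" and ?t = "trunc N a"
  let ?s' = "sigma_a ?t"
  define c where "c k = (if ?s k < N then \<bar>a (?s k)\<bar> powr p else 0)" for k
  have "pw_normp p w a = (\<Sum>k. ennreal (\<bar>a (?s k)\<bar> powr p * w k))"
    by (rule pw_eq_sorted[where w=w, OF a0 p wdec wpos])
  also have "\<dots> = (\<Sum>k. ennreal (c k * w k) + ennreal (\<bar>a (?s k)\<bar> powr p * w k * (if N \<le> ?s k then 1 else 0)))"
    by (intro suminf_cong) (auto simp: c_def wpos)
  also have "\<dots> = (\<Sum>k. ennreal (c k * w k)) + (\<Sum>k. ennreal (\<bar>a (?s k)\<bar> powr p * w k * (if N \<le> ?s k then 1 else 0)))"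
    by (rule suminf_add[symmetric]) (rule summableI)+
  also have "(\<Sum>k. ennreal (c k * w k)) \<le> (\<Sum>k. ennreal (\<bar>?t (?s' k)\<bar> powr p * w k))"
  proof (rule abel_compare[of w, OF wdec wpos])
    fix m
    let ?Q = "{k \<in> {..<m}. ?s k < N}"
    have "(\<Sum>k<m. c k) = (\<Sum>k\<in>?Q. \<bar>a (?s k)\<bar> powr p)"
      unfolding c_def by (simp add: sum.inter_filter[symmetric])
    also have "\<dots> = (\<Sum>k\<in>?Q. \<bar>?t (?s k)\<bar> powr p)"
      by (intro sum.cong) (auto simp: trunc_def)
    also have "\<dots> = (\<Sum>j\<in>?s ` ?Q. \<bar>?t j\<bar> powr p)"
      using sigma_inj[OF a0] by (simp add: sum.reindex inj_on_subset)
    also have "\<dots> \<le> (\<Sum>k<m. \<bar>?t (?s' k)\<bar> powr p)"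
    proof (rule top_sum[OF trunc_tendsto p])
      show "finite (?s ` ?Q)" by simp
      have "card (?s ` ?Q) \<le> card ?Q" by (rule card_image_le) simp
      also have "\<dots> \<le> card {..<m}" by (intro card_mono) auto
      finally show "card (?s ` ?Q) \<le> m" by simp
    qed
    finally show "(\<Sum>k<m. c k) \<le> (\<Sum>k<m. \<bar>?t (?s' k)\<bar> powr p)" .
  qed (auto simp: c_def)
  also have "(\<Sum>k. ennreal (\<bar>?t (?s' k)\<bar> powr p * w k)) = pw_normp p w ?t"
    by (rule pw_eq_sorted[where w=w, OF trunc_tendsto p wdec wpos, symmetric])
  finally show ?thesis by simp
qed

lemma pw_trunc_finite:
  fixes a :: "nat \<Rightarrow> real"
  assumes p: "0 \<le> p" and wdec: "\<And>k. w (Suc k) \<le> w k" and wpos: "\<And>k. 0 \<le> w k"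
  shows "pw_normp p w (trunc i a) = (\<Sum>k<i. ennreal (\<bar>trunc i a (sigma_a (trunc i a) k)\<bar> powr p * w k))"
proof -
  let ?t = "trunc i a"
  have "pw_normp p w ?t = (\<Sum>k. ennreal (\<bar>?t (sigma_a ?t k)\<bar> powr p * w k))"
    by (rule pw_eq_sorted[where w=w, OF trunc_tendsto p wdec wpos])
  also have "\<dots> = (\<Sum>k. ennreal (\<bar>?t (sigma_a ?t (k + i))\<bar> powr p * w (k + i))) + (\<Sum>k<i. ennreal (\<bar>?t (sigma_a ?t k)\<bar> powr p * w k))"
    by (rule suminf_offset) (rule summableI)
  also have "(\<Sum>k. ennreal (\<bar>?t (sigma_a ?t (k + i))\<bar> powr p * w (k + i))) = 0"
    using trunc_sigma_zero[of i] by simp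
  finally show ?thesis by simp
qed

lemma G_ineq:
  fixes a y :: "nat \<Rightarrow> real"
  assumes a0: "a \<longlonglongrightarrow> 0" and p: "0 \<le> p" and wdec: "\<And>k. w (Suc k) \<le> w k"
    and wpos: "\<And>k. 0 \<le> w k"
    and ypos: "\<And>r. 0 \<le> y r"
    and yle: "\<And>r. y r \<le> (if i1 \<le> sigma_a a r then \<bar>a (sigma_a a r)\<bar> powr p else 0)"
  shows "pw_normp p w (trunc i1 a) + (\<Sum>r. ennreal (y r * w (r + i1))) \<le> pw_normp p w a"
proof -
  let ?s = "sigma_a a" and ?t = "trunc i1 a"
  let ?s' = "sigma_a ?t"
  define c where "c k = (if k < i1 then \<bar>?t (?s' k)\<bar> powr p else y (k - i1))" for k
  have "(\<Sum>k. ennreal (c k * w k)) = (\<Sum>k. ennreal (c (k + i1) * w (k + i1))) + (\<Sum>k<i1. ennreal (c k * w k))"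
    by (rule suminf_offset) (rule summableI)
  also have "(\<Sum>k. ennreal (c (k + i1) * w (k + i1))) = (\<Sum>r. ennreal (y r * w (r + i1)))"
    by (simp add: c_def)
  also have "(\<Sum>k<i1. ennreal (c k * w k)) = pw_normp p w ?t"
    by (simp add: c_def pw_trunc_finite[where w=w, OF p wdec wpos])
  finally have eq: "(\<Sum>k. ennreal (c k * w k)) = pw_normp p w ?t + (\<Sum>r. ennreal (y r * w (r + i1)))"
    by (simp add: add.commute)
  have "(\<Sum>k. ennreal (c k * w k)) \<le> (\<Sum>k. ennreal (\<bar>a (?s k)\<bar> powr p * w k))"
  proof (rule abel_compare[of w, OF wdec wpos])
    fix m
    define Q1 where "Q1 = {k \<in> {..<min m i1}. ?s' k < i1}"
    define Q2 where "Q2 = {r \<in> {..<m - i1}. i1 \<le> ?s r}"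
    have split: "{..<m} = {..<min m i1} \<union> (\<lambda>r. r + i1) ` {..<m - i1}"
    proof (intro set_eqI iffI)
      fix x assume "x \<in> {..<m}"
      then show "x \<in> {..<min m i1} \<union> (\<lambda>r. r + i1) ` {..<m - i1}"
        by (cases "x < i1") (auto intro!: image_eqI[of _ _ "x - i1"])
    qed auto
    have "(\<Sum>k<m. c k) = (\<Sum>k<min m i1. c k) + (\<Sum>k\<in>(\<lambda>r. r + i1) ` {..<m - i1}. c k)"
      unfolding split by (rule sum.union_disjoint) auto
    also have "(\<Sum>k\<in>(\<lambda>r. r + i1) ` {..<m - i1}. c k) = (\<Sum>r<m - i1. y r)"
      by (subst sum.reindex) (auto simp: c_def)
    also have "(\<Sum>k<min m i1. c k) = (\<Sum>k\<in>Q1. \<bar>a (?s' k)\<bar> powr p)"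
    proof -
      have "(\<Sum>k<min m i1. c k) = (\<Sum>k<min m i1. if ?s' k < i1 then \<bar>a (?s' k)\<bar> powr p else 0)"
        by (intro sum.cong) (auto simp: c_def trunc_def)
      also have "\<dots> = (\<Sum>k\<in>Q1. \<bar>a (?s' k)\<bar> powr p)"
        unfolding Q1_def by (simp add: sum.inter_filter[symmetric])
      finally show ?thesis .
    qed
    also have "(\<Sum>r<m - i1. y r) \<le> (\<Sum>r<m - i1. if i1 \<le> ?s r then \<bar>a (?s r)\<bar> powr p else 0)"
      by (intro sum_mono yle)
    also have "\<dots> = (\<Sum>r\<in>Q2. \<bar>a (?s r)\<bar> powr p)"
      unfolding Q2_def by (simp add: sum.inter_filter[symmetric])
    also have "(\<Sum>k\<in>Q1. \<bar>a (?s' k)\<bar> powr p) + (\<Sum>r\<in>Q2. \<bar>a (?s r)\<bar> powr p)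
        = (\<Sum>j\<in>?s' ` Q1 \<union> ?s ` Q2. \<bar>a j\<bar> powr p)"
    proof -
      have "(\<Sum>j\<in>?s' ` Q1 \<union> ?s ` Q2. \<bar>a j\<bar> powr p) = (\<Sum>j\<in>?s' ` Q1. \<bar>a j\<bar> powr p) + (\<Sum>j\<in>?s ` Q2. \<bar>a j\<bar> powr p)"
        by (rule sum.union_disjoint) (auto simp: Q1_def Q2_def)
      also have "(\<Sum>j\<in>?s' ` Q1. \<bar>a j\<bar> powr p) = (\<Sum>k\<in>Q1. \<bar>a (?s' k)\<bar> powr p)"
        using sigma_inj[OF trunc_tendsto[of i1 a]] by (simp add: sum.reindex inj_on_subset)
      also have "(\<Sum>j\<in>?s ` Q2. \<bar>a j\<bar> powr p) = (\<Sum>k\<in>Q2. \<bar>a (?s k)\<bar> powr p)"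
        using sigma_inj[OF a0] by (simp add: sum.reindex inj_on_subset)
      finally show ?thesis by simp
    qed
    also have "\<dots> \<le> (\<Sum>k<m. \<bar>a (?s k)\<bar> powr p)"
    proof (rule top_sum[OF a0 p])
      show "finite (?s' ` Q1 \<union> ?s ` Q2)" by (simp add: Q1_def Q2_def)
      have "card (?s' ` Q1 \<union> ?s ` Q2) \<le> card (?s' ` Q1) + card (?s ` Q2)" by (rule card_Un_le)
      also have "\<dots> \<le> card Q1 + card Q2" by (intro add_mono card_image_le) (simp_all add: Q1_def Q2_def)
      also have "\<dots> \<le> card {..<min m i1} + card {..<m - i1}"
        by (intro add_mono card_mono) (auto simp: Q1_def Q2_def)
      also have "\<dots> = m" by simp
      finally show "card (?s' ` Q1 \<union> ?s ` Q2) \<le> m" .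
    qed
    finally show "(\<Sum>k<m. c k) \<le> (\<Sum>k<m. \<bar>a (?s k)\<bar> powr p)" by simp
  next
    fix k show "0 \<le> c k" using ypos by (simp add: c_def)
  qed auto
  also have "\<dots> = pw_normp p w a" by (rule pw_eq_sorted[where w=w, OF a0 p wdec wpos, symmetric])
  finally show ?thesis using eq by simp
qed


lemma sum_excess:
  fixes b :: "nat \<Rightarrow> real"
  assumes b0: "b \<longlonglongrightarrow> 0" and p: "0 \<le> p" and g: "0 \<le> \<gamma>" and hK: "\<bar>b (sigma_a b K)\<bar> powr p \<le> \<gamma>"
  shows "(\<Sum>k<K. if P (sigma_a b k) then max (\<bar>b (sigma_a b k)\<bar> powr p - \<gamma>) 0 else 0)
       = (\<Sum>j\<in>{j. \<gamma> < \<bar>b j\<bar> powr p \<and> P j}. \<bar>b j\<bar> powr p - \<gamma>)"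
proof -
  let ?s = "sigma_a b"
  let ?E = "{j. \<gamma> < \<bar>b j\<bar> powr p \<and> P j}"
  have sub: "?E \<subseteq> ?s ` {..<K}"
  proof
    fix j assume "j \<in> ?E"
    then have gj: "\<gamma> < \<bar>b j\<bar> powr p" by simp
    then have "b j \<noteq> 0" using g by auto
    then obtain k where k: "j = ?s k" using sigma_cover[OF b0] by blast
    have "k < K"
    proof (rule ccontr)
      assume "\<not> k < K"
      then have "\<bar>b (?s k)\<bar> \<le> \<bar>b (?s K)\<bar>" by (intro sigma_mono[OF b0]) simp
      then have "\<bar>b (?s k)\<bar> powr p \<le> \<bar>b (?s K)\<bar> powr p"
        using p by (intro powr_mono2) auto
      then show False using gj hK k by simp
    qed
    then show "j \<in> ?s ` {..<K}" using k by auto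
  qed
  have "(\<Sum>k<K. if P (?s k) then max (\<bar>b (?s k)\<bar> powr p - \<gamma>) 0 else 0)
      = (\<Sum>j\<in>?s ` {..<K}. if P j then max (\<bar>b j\<bar> powr p - \<gamma>) 0 else 0)"
    using sigma_inj[OF b0] by (simp add: sum.reindex inj_on_subset)
  also have "\<dots> = (\<Sum>j\<in>?E. \<bar>b j\<bar> powr p - \<gamma>)"
    by (rule sum.mono_neutral_cong_right) (use sub in auto)
  finally show ?thesis .
qed

lemma high_ineq:
  fixes a :: "nat \<Rightarrow> real"
  assumes a0: "a \<longlonglongrightarrow> 0" and p: "0 \<le> p" and wdec: "\<And>k. w (Suc k) \<le> w k"
    and wpos: "\<And>k. 0 \<le> w k" and wmono: "\<And>k k'. k \<le> k' \<Longrightarrow> w k' \<le> w k"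
    and g: "0 \<le> \<gamma>" and hK: "\<bar>a (sigma_a a K)\<bar> powr p \<le> \<gamma>"
  shows "pw_normp p w (trunc i2 a) + ennreal (w K * (\<Sum>k<K. if i2 \<le> sigma_a a k then max (\<bar>a (sigma_a a k)\<bar> powr p - \<gamma>) 0 else 0))
     \<le> pw_normp p w a"
proof -
  let ?s = "sigma_a a" and ?t = "trunc i2 a"
  let ?s' = "sigma_a ?t"
  define f where "f k = \<bar>a (?s k)\<bar> powr p" for k
  define f' where "f' k = \<bar>?t (?s' k)\<bar> powr p" for k
  define D where "D k = f k - f' k" for k
  have dle: "f' k \<le> f k" for k
    unfolding f_def f'_def using p
    by (intro powr_mono2 kth_compare[OF a0 trunc_tendsto trunc_abs_le]) auto
  have Dpos: "0 \<le> D k" for k using dle[of k] by (simp add: D_def)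
  have f'pos: "0 \<le> f' k" for k by (simp add: f'_def)
  have hK': "\<bar>?t (?s' K)\<bar> powr p \<le> \<gamma>"
    using dle[of K] hK by (simp add: f_def f'_def)
  define Z where "Z = (\<Sum>k<K. if i2 \<le> ?s k then max (f k - \<gamma>) 0 else 0)"
  have "pw_normp p w a = (\<Sum>k. ennreal (f k * w k))"
    unfolding f_def by (rule pw_eq_sorted[where w=w, OF a0 p wdec wpos])
  also have "\<dots> = (\<Sum>k. ennreal (f' k * w k) + ennreal (D k * w k))"
  proof (intro suminf_cong)
    fix k
    have "f k * w k = f' k * w k + D k * w k" by (simp add: D_def algebra_simps)
    also have "ennreal \<dots> = ennreal (f' k * w k) + ennreal (D k * w k)"
      by (rule ennreal_plus) (use f'pos Dpos wpos in \<open>auto intro: mult_nonneg_nonneg\<close>)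
    finally show "ennreal (f k * w k) = ennreal (f' k * w k) + ennreal (D k * w k)" .
  qed
  also have "\<dots> = (\<Sum>k. ennreal (f' k * w k)) + (\<Sum>k. ennreal (D k * w k))"
    by (rule suminf_add[symmetric]) (rule summableI)+
  also have "(\<Sum>k. ennreal (f' k * w k)) = pw_normp p w ?t"
    unfolding f'_def by (rule pw_eq_sorted[where w=w, OF trunc_tendsto p wdec wpos, symmetric])
  finally have eq: "pw_normp p w a = pw_normp p w ?t + (\<Sum>k. ennreal (D k * w k))" .
  have "(\<Sum>k<K. max (f k - \<gamma>) 0) = (\<Sum>k<K. if ?s k < i2 then max (f k - \<gamma>) 0 else 0) + Z"
    unfolding Z_def sum.distrib[symmetric] by (intro sum.cong) auto
  moreover have "(\<Sum>k<K. if ?s k < i2 then max (f k - \<gamma>) 0 else 0) = (\<Sum>k<K. max (f' k - \<gamma>) 0)"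
  proof -
    have "(\<Sum>k<K. if ?s k < i2 then max (f k - \<gamma>) 0 else 0)
        = (\<Sum>j\<in>{j. \<gamma> < \<bar>a j\<bar> powr p \<and> j < i2}. \<bar>a j\<bar> powr p - \<gamma>)"
      unfolding f_def by (rule sum_excess[OF a0 p g hK])
    also have "\<dots> = (\<Sum>j\<in>{j. \<gamma> < \<bar>?t j\<bar> powr p \<and> True}. \<bar>?t j\<bar> powr p - \<gamma>)"
    proof (rule sum.cong)
      show "{j. \<gamma> < \<bar>a j\<bar> powr p \<and> j < i2} = {j. \<gamma> < \<bar>?t j\<bar> powr p \<and> True}"
        using g by (auto simp: trunc_def)
    qed (use g in \<open>auto simp: trunc_def split: if_splits\<close>)
    also have "\<dots> = (\<Sum>k<K. if True then max (\<bar>?t (?s' k)\<bar> powr p - \<gamma>) 0 else 0)"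
      by (rule sum_excess[OF trunc_tendsto p g hK', symmetric])
    finally show ?thesis by (simp add: f'_def)
  qed
  ultimately have "Z = (\<Sum>k<K. max (f k - \<gamma>) 0) - (\<Sum>k<K. max (f' k - \<gamma>) 0)" by simp
  also have "\<dots> = (\<Sum>k<K. max (f k - \<gamma>) 0 - max (f' k - \<gamma>) 0)" by (simp add: sum_subtractf)
  also have "\<dots> \<le> (\<Sum>k<K. D k)"
  proof (intro sum_mono)
    fix k show "max (f k - \<gamma>) 0 - max (f' k - \<gamma>) 0 \<le> D k"
      using dle[of k] unfolding D_def max_def by (simp split: if_splits)
  qed
  finally have ZD: "Z \<le> (\<Sum>k<K. D k)" .
  have "w K * Z \<le> w K * (\<Sum>k<K. D k)" using ZD wpos[of K] by (intro mult_left_mono) auto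
  also have "\<dots> = (\<Sum>k<K. D k * w K)" by (simp add: sum_distrib_left mult.commute)
  also have "\<dots> \<le> (\<Sum>k<K. D k * w k)"
    by (intro sum_mono mult_left_mono wmono Dpos) auto
  finally have "ennreal (w K * Z) \<le> ennreal (\<Sum>k<K. D k * w k)" by (rule ennreal_leI)
  also have "\<dots> = (\<Sum>k<K. ennreal (D k * w k))"
    using Dpos wpos by (intro sum_ennreal[symmetric]) auto
  also have "\<dots> \<le> (\<Sum>k. ennreal (D k * w k))"
    unfolding suminf_eq_SUP by (rule SUP_upper) simp
  finally have "pw_normp p w ?t + ennreal (w K * Z) \<le> pw_normp p w a"
    unfolding eq by (rule add_left_mono)
  then show ?thesis unfolding Z_def f_def .
qed


lemma pw_mono:
  assumes le: "\<And>j. \<bar>b j\<bar> \<le> \<bar>a j\<bar>" and p: "0 \<le> p" and wpos: "\<And>k. 0 \<le> w k"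
  shows "pw_normp p w b \<le> pw_normp p w a"
  unfolding pw_normp_def
proof (rule SUP_mono)
  fix \<sigma> :: "nat \<Rightarrow> nat" assume "\<sigma> \<in> {\<sigma>. bij \<sigma>}"
  then show "\<exists>\<sigma>'\<in>{\<sigma>. bij \<sigma>}. (\<Sum>i. ennreal (\<bar>b (\<sigma> i)\<bar> powr p * w i)) \<le> (\<Sum>i. ennreal (\<bar>a (\<sigma>' i)\<bar> powr p * w i))"
    by (intro bexI[of _ \<sigma>] suminf_le ennreal_leI mult_right_mono powr_mono2 le wpos summableI) (use p in auto)
qed

lemma sum_shift_split:
  fixes w :: "nat \<Rightarrow> real"
  shows "(\<Sum>k<n + i. w k) = (\<Sum>k<i. w k) + (\<Sum>k<n. w (k + i))"
  by (induction n) (simp_all add: add.commute add.left_commute)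

lemma low_bound:
  fixes w :: "nat \<Rightarrow> real"
  assumes wpos: "\<And>k. 0 \<le> w k" and w1: "\<And>k. w k \<le> 1"
    and wmono: "\<And>k k'. k \<le> k' \<Longrightarrow> w k' \<le> w k" and g: "0 \<le> \<gamma>"
  shows "(\<Sum>k. ennreal (\<gamma> * (w k - w (k + i)))) \<le> ennreal (\<gamma> * real i)"
  unfolding suminf_eq_SUP
proof (rule SUP_least)
  fix n
  have nn: "\<And>k. 0 \<le> \<gamma> * (w k - w (k + i))" using g wmono by (intro mult_nonneg_nonneg) auto
  have "(\<Sum>k<n. ennreal (\<gamma> * (w k - w (k + i)))) = ennreal (\<Sum>k<n. \<gamma> * (w k - w (k + i)))"
    using nn by (intro sum_ennreal) auto
  also have "\<dots> \<le> ennreal (\<gamma> * real i)"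
  proof (rule ennreal_leI)
    have "(\<Sum>k<n. w k) \<le> (\<Sum>k<n + i. w k)" by (intro sum_mono2) (auto simp: wpos)
    also have "\<dots> = (\<Sum>k<i. w k) + (\<Sum>k<n. w (k + i))" by (rule sum_shift_split)
    finally have "(\<Sum>k<n. w k - w (k + i)) \<le> (\<Sum>k<i. w k)" by (simp add: sum_subtractf)
    also have "\<dots> \<le> (\<Sum>k<i. 1)" by (intro sum_mono w1)
    finally have "(\<Sum>k<n. w k - w (k + i)) \<le> real i" by simp
    then have "\<gamma> * (\<Sum>k<n. w k - w (k + i)) \<le> \<gamma> * real i" using g by (intro mult_left_mono)
    then show "(\<Sum>k<n. \<gamma> * (w k - w (k + i))) \<le> \<gamma> * real i" by (simp add: sum_distrib_left)
  qed
  finally show "(\<Sum>k<n. ennreal (\<gamma> * (w k - w (k + i)))) \<le> ennreal (\<gamma> * real i)" .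
qed

lemma unbounded_partial:
  fixes w :: "nat \<Rightarrow> real"
  assumes wpos: "\<And>k. 0 \<le> w k" and ns: "\<not> summable w"
  shows "\<exists>n. M < (\<Sum>k<n. w k)"
proof (rule ccontr)
  assume "\<not> (\<exists>n. M < (\<Sum>k<n. w k))"
  then have "\<And>n. (\<Sum>k<n. w k) \<le> M" by (simp add: not_less)
  then have "summable w" by (intro summableI_nonneg_bounded[of w M] wpos)
  with ns show False by simp
qed


lemma core_fwd:
  fixes A :: "(nat \<Rightarrow> real) set"
  assumes p: "0 < p" and B0: "0 \<le> B" and w: "weight_seq w" and AL: "A \<subseteq> Lpw p w"
    and Bnd: "\<And>a. a \<in> A \<Longrightarrow> pw_normp p w a \<le> ennreal B"
    and Feq: "\<forall>\<epsilon>>0. \<exists>i. \<forall>a\<in>A. pw_normp p w a \<le> pw_normp p w (trunc i a) + ennreal \<epsilon>"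
  shows "\<forall>\<epsilon>>0. \<exists>N. \<forall>a\<in>A. \<forall>i\<ge>N.
       (\<Sum>j. ennreal (\<bar>a (j + i)\<bar> powr p * w_inv w a (j + i))) < ennreal \<epsilon>"
proof (intro allI impI)
  fix \<epsilon> :: real assume "0 < \<epsilon>"
  have p0: "0 \<le> p" using p by simp
  have wpos: "\<And>k. 0 \<le> w k" using weight_props(1)[OF w] less_imp_le by blast
  have wpos': "\<And>k. 0 < w k" using weight_props(1)[OF w] by blast
  have wdec: "\<And>k. w (Suc k) \<le> w k" by (rule weight_props(2)[OF w])
  have w1: "\<And>k. w k \<le> 1" by (rule weight_props(3)[OF w])
  have wmono: "\<And>k k'. k \<le> k' \<Longrightarrow> w k' \<le> w k" by (rule weight_props(5)[OF w])
  define e4 where "e4 = \<epsilon> / 4"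
  have e4: "0 < e4" using \<open>0 < \<epsilon>\<close> by (simp add: e4_def)
  obtain i1 where i1: "\<And>a. a \<in> A \<Longrightarrow> pw_normp p w a \<le> pw_normp p w (trunc i1 a) + ennreal e4"
    using Feq e4 by blast
  define \<gamma> where "\<gamma> = e4 / (real i1 + 1)"
  have g: "0 < \<gamma>" using e4 by (simp add: \<gamma>_def)
  have gi1: "\<gamma> * real i1 \<le> e4"
  proof -
    have "\<gamma> * real i1 = e4 * (real i1 / (real i1 + 1))" by (simp add: \<gamma>_def)
    also have "\<dots> \<le> e4 * 1" using e4 by (intro mult_left_mono) auto
    finally show ?thesis by simp
  qed
  obtain K where K: "B / \<gamma> < (\<Sum>k<K. w k)"
    using unbounded_partial[OF wpos weight_props(6)[OF w]] by blast
  have fK: "\<bar>a (sigma_a a K)\<bar> powr p \<le> \<gamma>" if aA: "a \<in> A" for a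
  proof -
    have a0: "a \<longlonglongrightarrow> 0" using Lpw_tendsto[OF w p] AL aA by blast
    let ?f = "\<lambda>k. \<bar>a (sigma_a a k)\<bar> powr p"
    define S where "S = (\<Sum>k<K. w k)"
    have "?f K * S = (\<Sum>k<K. ?f K * w k)" by (simp add: S_def sum_distrib_left)
    also have "\<dots> \<le> (\<Sum>k<K. ?f k * w k)"
      using p0 by (intro sum_mono mult_right_mono powr_mono2 sigma_mono[OF a0] wpos) auto
    finally have le1: "?f K * S \<le> (\<Sum>k<K. ?f k * w k)" .
    have "ennreal (\<Sum>k<K. ?f k * w k) = (\<Sum>k<K. ennreal (?f k * w k))"
      using wpos by (intro sum_ennreal[symmetric]) auto
    also have "\<dots> \<le> (\<Sum>k. ennreal (?f k * w k))"
      unfolding suminf_eq_SUP by (rule SUP_upper) simp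
    also have "\<dots> = pw_normp p w a" by (rule pw_eq_sorted[where w=w, OF a0 p0 wdec wpos, symmetric])
    also have "\<dots> \<le> ennreal B" by (rule Bnd[OF aA])
    finally have "(\<Sum>k<K. ?f k * w k) \<le> B"
      using B0 by (simp add: ennreal_le_iff)
    with le1 have "?f K * S \<le> B" by linarith
    moreover have "B < \<gamma> * S" using K g by (simp add: S_def pos_divide_less_eq mult.commute)
    ultimately have "?f K * S < \<gamma> * S" by linarith
    moreover have "0 < S"
    proof -
      show ?thesis using B0 using K g unfolding S_def by (smt (verit) divide_nonneg_pos)
    qed
    ultimately show ?thesis by simp
  qed
  define e2 where "e2 = w K * e4"
  have e2: "0 < e2" using e4 wpos'[of K] by (simp add: e2_def)
  obtain i2 where i2: "\<And>a. a \<in> A \<Longrightarrow> pw_normp p w a \<le> pw_normp p w (trunc i2 a) + ennreal e2"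
    using Feq e2 by blast
  show "\<exists>N. \<forall>a\<in>A. \<forall>i\<ge>N. (\<Sum>j. ennreal (\<bar>a (j + i)\<bar> powr p * w_inv w a (j + i))) < ennreal \<epsilon>"
  proof (intro exI[of _ "max i1 i2"] ballI allI impI)
    fix a i assume aA: "a \<in> A" and ii: "max i1 i2 \<le> i"
    have a0: "a \<longlonglongrightarrow> 0" using Lpw_tendsto[OF w p] AL aA by blast
    let ?s = "sigma_a a"
    define fs where "fs k = \<bar>a (?s k)\<bar> powr p" for k
    have fspos: "0 \<le> fs k" for k by (simp add: fs_def)
    define y where "y k = (if i \<le> ?s k then min (fs k) \<gamma> else 0)" for k
    define z where "z k = (if i \<le> ?s k then max (fs k - \<gamma>) 0 else 0)" for k
    define z' where "z' k = (if i2 \<le> ?s k then max (fs k - \<gamma>) 0 else 0)" for k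
    have ypos: "0 \<le> y k" for k using fspos g by (simp add: y_def)
    have zpos: "0 \<le> z k" for k by (simp add: z_def)
    have Pfin: "pw_normp p w (trunc j a) \<noteq> \<infinity>" for j
    proof -
      have "pw_normp p w (trunc j a) \<le> pw_normp p w a" by (rule pw_mono[OF trunc_abs_le p0 wpos])
      also have "\<dots> \<le> ennreal B" by (rule Bnd[OF aA])
      finally show ?thesis using top.extremum_uniqueI by fastforce
    qed
    have "(\<Sum>j. ennreal (\<bar>a (j + i)\<bar> powr p * w_inv w a (j + i)))
        = (\<Sum>k. ennreal (fs k * w k * (if i \<le> ?s k then 1 else 0)))"
      unfolding fs_def by (rule tail_identity[OF a0])
    also have "\<dots> = (\<Sum>k. ennreal (y k * w k) + ennreal (z k * w k))"
    proof (intro suminf_cong)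
      fix k
      have "fs k * w k * (if i \<le> ?s k then 1 else 0) = y k * w k + z k * w k"
        by (simp add: y_def z_def min_def max_def algebra_simps)
      also have "ennreal \<dots> = ennreal (y k * w k) + ennreal (z k * w k)"
        by (rule ennreal_plus) (use ypos zpos wpos in \<open>auto intro: mult_nonneg_nonneg\<close>)
      finally show "ennreal (fs k * w k * (if i \<le> ?s k then 1 else 0)) = ennreal (y k * w k) + ennreal (z k * w k)" .
    qed
    also have "\<dots> = (\<Sum>k. ennreal (y k * w k)) + (\<Sum>k. ennreal (z k * w k))"
      by (rule suminf_add[symmetric]) (rule summableI)+
    also have "(\<Sum>k. ennreal (y k * w k)) \<le> ennreal e4 + ennreal e4"
    proof -
      have "(\<Sum>k. ennreal (y k * w k)) \<le> (\<Sum>k. ennreal (y k * w (k + i1)) + ennreal (\<gamma> * (w k - w (k + i1))))"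
      proof (intro suminf_le summableI)
        fix k
        have yg: "y k \<le> \<gamma>" using g by (simp add: y_def)
        have d: "0 \<le> w k - w (k + i1)" using wmono[of k "k + i1"] by simp
        have "y k * w k = y k * w (k + i1) + y k * (w k - w (k + i1))" by (simp add: algebra_simps)
        also have "\<dots> \<le> y k * w (k + i1) + \<gamma> * (w k - w (k + i1))"
          using yg d by (intro add_left_mono mult_right_mono) auto
        finally have "ennreal (y k * w k) \<le> ennreal (y k * w (k + i1) + \<gamma> * (w k - w (k + i1)))"
          by (rule ennreal_leI)
        also have "\<dots> = ennreal (y k * w (k + i1)) + ennreal (\<gamma> * (w k - w (k + i1)))"
          by (rule ennreal_plus) (use ypos wpos d g in \<open>auto intro: mult_nonneg_nonneg\<close>)
        finally show "ennreal (y k * w k) \<le> ennreal (y k * w (k + i1)) + ennreal (\<gamma> * (w k - w (k + i1)))" .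
      qed
      also have "\<dots> = (\<Sum>k. ennreal (y k * w (k + i1))) + (\<Sum>k. ennreal (\<gamma> * (w k - w (k + i1))))"
        by (rule suminf_add[symmetric]) (rule summableI)+
      also have "(\<Sum>k. ennreal (y k * w (k + i1))) \<le> ennreal e4"
      proof -
        have "pw_normp p w (trunc i1 a) + (\<Sum>r. ennreal (y r * w (r + i1))) \<le> pw_normp p w a"
        proof (rule G_ineq[where w=w, OF a0 p0 wdec wpos ypos])
          fix r show "y r \<le> (if i1 \<le> ?s r then \<bar>a (?s r)\<bar> powr p else 0)"
            using ii by (auto simp: y_def fs_def)
        qed
        also have "\<dots> \<le> pw_normp p w (trunc i1 a) + ennreal e4" by (rule i1[OF aA])
        finally show ?thesis using Pfin[of i1] by (simp add: ennreal_add_left_cancel_le)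
      qed
      also have "(\<Sum>k. ennreal (\<gamma> * (w k - w (k + i1)))) \<le> ennreal (\<gamma> * real i1)"
        by (rule low_bound[OF wpos w1 wmono less_imp_le[OF g]])
      also have "ennreal (\<gamma> * real i1) \<le> ennreal e4" by (rule ennreal_leI[OF gi1])
      finally show ?thesis by simp
    qed
    also have "(\<Sum>k. ennreal (z k * w k)) \<le> ennreal e4"
    proof -
      have zK: "z k = 0" if "K \<le> k" for k
      proof -
        have "fs k \<le> fs K" unfolding fs_def using p0
          by (intro powr_mono2 sigma_mono[OF a0 that]) auto
        then show ?thesis using fK[OF aA] by (simp add: z_def fs_def max_def)
      qed
      have "(\<Sum>k. ennreal (z k * w k)) = (\<Sum>k<K. ennreal (z k * w k))"
        by (rule suminf_finite) (use zK in auto)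
      also have "\<dots> \<le> (\<Sum>k<K. ennreal (z' k))"
      proof (intro sum_mono ennreal_leI)
        fix k
        have "z k * w k \<le> z k * 1" using zpos w1 by (intro mult_left_mono) auto
        also have "\<dots> \<le> z' k" using ii by (auto simp: z_def z'_def)
        finally show "z k * w k \<le> z' k" .
      qed
      also have "\<dots> = ennreal (\<Sum>k<K. z' k)" by (intro sum_ennreal) (simp add: z'_def)
      also have "\<dots> \<le> ennreal e4"
      proof -
        have "pw_normp p w (trunc i2 a) + ennreal (w K * (\<Sum>k<K. z' k)) \<le> pw_normp p w a"
          unfolding z'_def fs_def
          by (rule high_ineq[where w=w, OF a0 p0 wdec wpos wmono less_imp_le[OF g] fK[OF aA]])
        also have "\<dots> \<le> pw_normp p w (trunc i2 a) + ennreal e2" by (rule i2[OF aA])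
        finally have "ennreal (w K * (\<Sum>k<K. z' k)) \<le> ennreal (w K * e4)"
          using Pfin[of i2] by (simp add: ennreal_add_left_cancel_le e2_def)
        then have "w K * (\<Sum>k<K. z' k) \<le> w K * e4"
          using e4 wpos[of K] by (simp add: ennreal_le_iff)
        then have "(\<Sum>k<K. z' k) \<le> e4" using wpos'[of K] by simp
        then show ?thesis by (rule ennreal_leI)
      qed
      finally show ?thesis .
    qed
    also have "ennreal e4 + ennreal e4 + ennreal e4 = ennreal (3 * e4)"
      using e4 by (simp flip: ennreal_plus)
    also have "\<dots> < ennreal \<epsilon>" using e4 \<open>0 < \<epsilon>\<close> by (subst ennreal_less_iff) (auto simp: e4_def)
    finally show "(\<Sum>j. ennreal (\<bar>a (j + i)\<bar> powr p * w_inv w a (j + i))) < ennreal \<epsilon>"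
      by (simp add: add_mono)
  qed
qed


lemma core_back:
  fixes A :: "(nat \<Rightarrow> real) set"
  assumes p: "0 < p" and w: "weight_seq w" and AL: "A \<subseteq> Lpw p w"
    and T: "\<forall>\<epsilon>>0. \<exists>N. \<forall>a\<in>A. \<forall>i\<ge>N.
       (\<Sum>j. ennreal (\<bar>a (j + i)\<bar> powr p * w_inv w a (j + i))) < ennreal \<epsilon>"
  shows "\<forall>\<epsilon>>0. \<exists>i. \<forall>a\<in>A. pw_normp p w a \<le> pw_normp p w (trunc i a) + ennreal \<epsilon>"
proof (intro allI impI)
  fix \<epsilon> :: real assume "0 < \<epsilon>"
  then obtain N where N: "\<And>a i. a \<in> A \<Longrightarrow> N \<le> i \<Longrightarrow>
      (\<Sum>j. ennreal (\<bar>a (j + i)\<bar> powr p * w_inv w a (j + i))) < ennreal \<epsilon>"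
    using T by blast
  have p0: "0 \<le> p" using p by simp
  have wpos: "\<And>k. 0 \<le> w k" using weight_props(1)[OF w] less_imp_le by blast
  have wdec: "\<And>k. w (Suc k) \<le> w k" by (rule weight_props(2)[OF w])
  show "\<exists>i. \<forall>a\<in>A. pw_normp p w a \<le> pw_normp p w (trunc i a) + ennreal \<epsilon>"
  proof (intro exI[of _ N] ballI)
    fix a assume aA: "a \<in> A"
    have a0: "a \<longlonglongrightarrow> 0" using Lpw_tendsto[OF w p] AL aA by blast
    have "pw_normp p w a \<le> pw_normp p w (trunc N a)
       + (\<Sum>k. ennreal (\<bar>a (sigma_a a k)\<bar> powr p * w k * (if N \<le> sigma_a a k then 1 else 0)))"
      by (rule back_core[where w=w, OF a0 p0 wdec wpos])
    also have "(\<Sum>k. ennreal (\<bar>a (sigma_a a k)\<bar> powr p * w k * (if N \<le> sigma_a a k then 1 else 0)))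
        = (\<Sum>j. ennreal (\<bar>a (j + N)\<bar> powr p * w_inv w a (j + N)))"
      by (rule tail_identity[OF a0, symmetric])
    also have "\<dots> \<le> ennreal \<epsilon>" using N[OF aA order_refl] by simp
    finally show "pw_normp p w a \<le> pw_normp p w (trunc N a) + ennreal \<epsilon>" by simp
  qed
qed

lemma powr_superadd:
  fixes u v r :: real
  assumes u: "0 \<le> u" and v: "0 \<le> v" and r: "1 \<le> r"
  shows "u powr r + v powr r \<le> (u + v) powr r"
proof -
  have "u powr r = u * u powr (r - 1)" using u by (simp add: powr_mult_base)
  also have "\<dots> \<le> u * (u + v) powr (r - 1)" using u v r by (intro mult_left_mono powr_mono2) auto
  finally have 1: "u powr r \<le> u * (u + v) powr (r - 1)" .
  have "v powr r = v * v powr (r - 1)" using v by (simp add: powr_mult_base)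
  also have "\<dots> \<le> v * (u + v) powr (r - 1)" using u v r by (intro mult_left_mono powr_mono2) auto
  finally have 2: "v powr r \<le> v * (u + v) powr (r - 1)" .
  have "u * (u + v) powr (r - 1) + v * (u + v) powr (r - 1) = (u + v) * (u + v) powr (r - 1)"
    by (simp add: algebra_simps)
  also have "\<dots> = (u + v) powr r" using u v by (simp add: powr_mult_base)
  finally show ?thesis using 1 2 by simp
qed

lemma powr_subadd:
  fixes x y q :: real
  assumes x: "0 \<le> x" and y: "0 \<le> y" and q: "0 < q" "q \<le> 1"
  shows "(x + y) powr q \<le> x powr q + y powr q"
proof -
  define u where "u = x powr q"
  define v where "v = y powr q"
  have u: "0 \<le> u" "u powr (1/q) = x" using x q by (simp_all add: u_def powr_powr powr_one)
  have v: "0 \<le> v" "v powr (1/q) = y" using y q by (simp_all add: v_def powr_powr powr_one)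
  have "x + y \<le> (u + v) powr (1/q)"
    using powr_superadd[OF u(1) v(1), of "1/q"] q u v by simp
  then have "(x + y) powr q \<le> ((u + v) powr (1/q)) powr q"
    using x y q by (intro powr_mono2) auto
  also have "\<dots> = u + v" using u v q by (simp add: powr_powr powr_one)
  finally show ?thesis by (simp add: u_def v_def)
qed


theorem mainTheorem14:
  fixes p :: real and w :: "nat \<Rightarrow> real" and A :: "(nat \<Rightarrow> real) set"
  assumes "p \<ge> 1" and "weight_seq w"
    and "A \<subseteq> Lpw p w"
    and "\<exists>C. \<forall>a\<in>A. pw_norm p w a \<le> C"
  shows "equinormed p w A \<longleftrightarrow>
    (\<forall>\<epsilon>>0. \<exists>N. \<forall>a\<in>A. \<forall>i\<ge>N.
       (\<Sum>j. ennreal (\<bar>a (j + i)\<bar> powr p * w_inv w a (j + i))) < ennreal \<epsilon>)"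
proof -
  have p: "0 < p" using assms(1) by simp
  have p0: "0 \<le> p" using p by simp
  have w: "weight_seq w" by (rule assms(2))
  have AL: "A \<subseteq> Lpw p w" by (rule assms(3))
  have wpos: "\<And>k. 0 \<le> w k" using weight_props(1)[OF w] less_imp_le by blast
  obtain C0 where C0: "\<And>a. a \<in> A \<Longrightarrow> pw_norm p w a \<le> C0" using assms(4) by blast
  define C where "C = max C0 0"
  have C: "\<And>a. a \<in> A \<Longrightarrow> pw_norm p w a \<le> C" "0 \<le> C" using C0 by (force simp: C_def)+
  define R where "R a = enn2real (pw_normp p w a)" for a
  have Rpos: "0 \<le> R a" for a by (simp add: R_def)
  have fin: "pw_normp p w a \<noteq> \<infinity>" if "a \<in> A" for a using AL that by (auto simp: Lpw_def)
  have fint: "pw_normp p w (trunc i a) \<noteq> \<infinity>" if "a \<in> A" for a i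
  proof -
    have "pw_normp p w (trunc i a) \<le> pw_normp p w a" by (rule pw_mono[OF trunc_abs_le p0 wpos])
    then show ?thesis using fin[OF that] by (metis infinity_ennreal_def top.extremum_uniqueI)
  qed
  have PR: "pw_normp p w a = ennreal (R a)" if "pw_normp p w a \<noteq> \<infinity>" for a
    using that by (simp add: R_def ennreal_enn2real_if)
  have normR: "pw_norm p w a = R a powr (1/p)" for a by (simp add: pw_norm_def R_def)
  have Rnorm: "(pw_norm p w a) powr p = R a" for a
    using p Rpos[of a] by (simp add: normR powr_powr powr_one)
  have normi: "pw_norm_i p w i a = pw_norm p w (trunc i a)" for i a
    by (simp add: pw_norm_i_def trunc_def)
  have Rmono: "R (trunc i a) \<le> R a" if "a \<in> A" for i a
  proof -
    have "pw_normp p w (trunc i a) \<le> pw_normp p w a" by (rule pw_mono[OF trunc_abs_le p0 wpos])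
    then show ?thesis unfolding R_def using fin[OF that] by (intro enn2real_mono) (simp_all add: less_top)
  qed
  define B where "B = C powr p"
  have B0: "0 \<le> B" by (simp add: B_def)
  have Bnd: "pw_normp p w a \<le> ennreal B" if aA: "a \<in> A" for a
  proof -
    have "R a = (pw_norm p w a) powr p" by (rule Rnorm[symmetric])
    also have "\<dots> \<le> C powr p" using C(1)[OF aA] p0 by (intro powr_mono2) (auto simp: normR)
    finally show ?thesis using PR[OF fin[OF aA]] by (simp add: B_def ennreal_leI)
  qed
  have eqF: "equinormed p w A \<longleftrightarrow> (\<forall>\<epsilon>>0. \<exists>i. \<forall>a\<in>A. pw_normp p w a \<le> pw_normp p w (trunc i a) + ennreal \<epsilon>)"
  proof
    assume eq: "equinormed p w A"
    show "\<forall>\<epsilon>>0. \<exists>i. \<forall>a\<in>A. pw_normp p w a \<le> pw_normp p w (trunc i a) + ennreal \<epsilon>"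
    proof (intro allI impI)
      fix \<epsilon> :: real assume "0 < \<epsilon>"
      have "continuous_on {0..C} (\<lambda>x::real. x powr p)"
        using p by (intro continuous_on_powr' continuous_intros) auto
      then have "uniformly_continuous_on {0..C} (\<lambda>x::real. x powr p)"
        by (rule compact_uniformly_continuous) simp
      then obtain d where d: "0 < d" and
        dd: "\<And>x x'. x \<in> {0..C} \<Longrightarrow> x' \<in> {0..C} \<Longrightarrow> dist x' x < d \<Longrightarrow> dist (x' powr p) (x powr p) < \<epsilon>"
        unfolding uniformly_continuous_on_def using \<open>0 < \<epsilon>\<close> by metis
      obtain i where i: "\<And>a. a \<in> A \<Longrightarrow> pw_norm p w a \<le> pw_norm_i p w i a + d / 2"
        using eq d unfolding equinormed_def by (meson half_gt_zero)
      show "\<exists>i. \<forall>a\<in>A. pw_normp p w a \<le> pw_normp p w (trunc i a) + ennreal \<epsilon>"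
      proof (intro exI[of _ i] ballI)
        fix a assume aA: "a \<in> A"
        let ?t = "trunc i a"
        have x1: "pw_norm p w ?t \<le> pw_norm p w a"
          unfolding normR using Rmono[OF aA] p by (intro powr_mono2) (auto simp: Rpos)
        have x2: "pw_norm p w a \<le> pw_norm p w ?t + d / 2" using i[OF aA] by (simp add: normi)
        have inS: "pw_norm p w ?t \<in> {0..C}" "pw_norm p w a \<in> {0..C}"
          using x1 C(1)[OF aA] by (auto simp: normR)
        have "dist (pw_norm p w a) (pw_norm p w ?t) < d" using x1 x2 d by (simp add: dist_real_def)
        then have "dist ((pw_norm p w a) powr p) ((pw_norm p w ?t) powr p) < \<epsilon>"
          by (rule dd[OF inS(1) inS(2)])
        then have "R a < R ?t + \<epsilon>" by (simp add: Rnorm dist_real_def)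
        then have "ennreal (R a) \<le> ennreal (R ?t + \<epsilon>)" by (intro ennreal_leI) simp
        also have "\<dots> = ennreal (R ?t) + ennreal \<epsilon>" using \<open>0 < \<epsilon>\<close> by (simp add: ennreal_plus Rpos)
        finally show "pw_normp p w a \<le> pw_normp p w ?t + ennreal \<epsilon>"
          using PR[OF fin[OF aA]] PR[OF fint[OF aA]] by simp
      qed
    qed
  next
    assume F: "\<forall>\<epsilon>>0. \<exists>i. \<forall>a\<in>A. pw_normp p w a \<le> pw_normp p w (trunc i a) + ennreal \<epsilon>"
    show "equinormed p w A" unfolding equinormed_def
    proof (intro allI impI)
      fix \<epsilon> :: real assume "0 < \<epsilon>"
      then have "0 < \<epsilon> powr p" by simp
      then obtain i where i: "\<And>a. a \<in> A \<Longrightarrow> pw_normp p w a \<le> pw_normp p w (trunc i a) + ennreal (\<epsilon> powr p)"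
        using F by blast
      show "\<exists>i. \<forall>a\<in>A. pw_norm p w a \<le> pw_norm_i p w i a + \<epsilon>"
      proof (intro exI[of _ i] ballI)
        fix a assume aA: "a \<in> A"
        let ?t = "trunc i a"
        have "ennreal (R a) \<le> ennreal (R ?t) + ennreal (\<epsilon> powr p)"
          using i[OF aA] PR[OF fin[OF aA]] PR[OF fint[OF aA]] by simp
        also have "\<dots> = ennreal (R ?t + \<epsilon> powr p)" by (simp add: ennreal_plus Rpos)
        finally have le: "ennreal (R a) \<le> ennreal (R ?t + \<epsilon> powr p)" .
        have nn: "0 \<le> R ?t + \<epsilon> powr p" using Rpos[of ?t] by simp
        have "R a \<le> R ?t + \<epsilon> powr p" using ennreal_le_iff[OF nn, of "R a"] le by blast
        then have "R a powr (1/p) \<le> (R ?t + \<epsilon> powr p) powr (1/p)"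
          using p by (intro powr_mono2) (auto simp: Rpos)
        also have "\<dots> \<le> R ?t powr (1/p) + (\<epsilon> powr p) powr (1/p)"
          using p assms(1) by (intro powr_subadd) (auto simp: Rpos)
        also have "(\<epsilon> powr p) powr (1/p) = \<epsilon>" using p \<open>0 < \<epsilon>\<close> by (simp add: powr_powr)
        finally show "pw_norm p w a \<le> pw_norm_i p w i a + \<epsilon>" by (simp add: normR normi)
      qed
    qed
  qed
  show ?thesis
    unfolding eqF
    using core_fwd[OF p B0 w AL Bnd] core_back[OF p w AL] by blast
qed

end
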